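(* Let $G$ be a bipartite graph with left degree $D$ that has $(\tfrac 2 3 D + 2)$-expansion up to $K+1$. Let $Y$ be a set of right nodes with $\#Y \le 2K+1$, and let $P$ be a set of left nodes such that every $x \in P$ satisfies $\#({\mathcal N}(x) \cap Y) \ge D/3$. Then $\#P \le K$.
   Context: ${\mathcal N}(x)$ is the set of neighbors of $x$. Left degree $D$ means every left node has exactly $D$ neighbors. A graph has $e$-expansion up to $K$ if every set $S$ of left nodes with $\#S\le K$ has at least $e\,\#S$ neighbors. *)

theory Defs
  imports Complex_Main
begin

definition bipartite :: "'a set \<Rightarrow> 'b set \<Rightarrow> ('a \<Rightarrow> 'b set) \<Rightarrow> bool" where
  "bipartite L R N \<longleftrightarrow> (\<forall>x\<in>L. N x \<subseteq> R)"

definition left_degree :: "'a set \<Rightarrow> ('a \<Rightarrow> 'b set) \<Rightarrow> nat \<Rightarrow> bool" where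
  "left_degree L N D \<longleftrightarrow> (\<forall>x\<in>L. finite (N x) \<and> card (N x) = D)"

definition has_expansion :: "'a set \<Rightarrow> ('a \<Rightarrow> 'b set) \<Rightarrow> real \<Rightarrow> nat \<Rightarrow> bool" where
  "has_expansion L N e K \<longleftrightarrow>
     (\<forall>S. S \<subseteq> L \<and> finite S \<and> card S \<le> K \<longrightarrow> real (card (\<Union>x\<in>S. N x)) \<ge> e * real (card S))"

end

theory Submission
  imports Defs
begin

theorem lemma5:
  fixes L :: "'a set" and R :: "'b set" and N :: "'a \<Rightarrow> 'b set"
    and D K :: nat and Y :: "'b set" and P :: "'a set"
  assumes "bipartite L R N"
    and "left_degree L N D"
    and "has_expansion L N (2/3 * real D + 2) (K + 1)"
    and "Y \<subseteq> R" and "finite Y" and "card Y \<le> 2 * K + 1"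
    and "P \<subseteq> L"
    and "\<forall>x\<in>P. real (card (N x \<inter> Y)) \<ge> real D / 3"
  shows "finite P \<and> card P \<le> K"
proof -
  have noS: False if S: "S \<subseteq> P" "finite S" "card S = K + 1" for S
  proof -
    have fin: "\<And>x. x \<in> S \<Longrightarrow> finite (N x) \<and> card (N x) = D"
      using assms(2,7) S(1) unfolding left_degree_def by blast
    have exp: "real (card (\<Union>x\<in>S. N x)) \<ge> (2/3 * real D + 2) * real (card S)"
    proof -
      have "S \<subseteq> L" using S(1) assms(7) by blast
      then show ?thesis using assms(3) S(2,3) unfolding has_expansion_def by (metis order_refl)
    qed
    have each: "real (card (N x - Y)) \<le> 2/3 * real D" if x: "x \<in> S" for x
    proof -
      have "card (N x - Y) = card (N x) - card (N x \<inter> Y)"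
        using fin[OF x] by (simp add: card_Diff_subset_Int)
      moreover have "card (N x \<inter> Y) \<le> card (N x)"
        using fin[OF x] by (meson card_mono inf_le1)
      ultimately have "real (card (N x - Y)) = real D - real (card (N x \<inter> Y))"
        using fin[OF x] by (simp add: of_nat_diff)
      with assms(8) x S(1) show ?thesis by force
    qed
    have sub: "(\<Union>x\<in>S. N x) \<subseteq> Y \<union> (\<Union>x\<in>S. N x - Y)" by blast
    have "card (\<Union>x\<in>S. N x) \<le> card (Y \<union> (\<Union>x\<in>S. N x - Y))"
      by (rule card_mono) (use assms(5) S(2) fin in auto)
    also have "\<dots> \<le> card Y + card (\<Union>x\<in>S. N x - Y)" by (rule card_Un_le)
    also have "card (\<Union>x\<in>S. N x - Y) \<le> (\<Sum>x\<in>S. card (N x - Y))" by (rule card_UN_le[OF S(2)])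
    finally have "real (card (\<Union>x\<in>S. N x)) \<le> real (card Y) + (\<Sum>x\<in>S. real (card (N x - Y)))"
      by (metis add_le_cancel_left of_nat_add of_nat_le_iff of_nat_sum)
    also have "(\<Sum>x\<in>S. real (card (N x - Y))) \<le> (\<Sum>x\<in>S. 2/3 * real D)"
      by (rule sum_mono) (rule each)
    finally have "real (card (\<Union>x\<in>S. N x)) \<le> real (card Y) + real (card S) * (2/3 * real D)"
      by simp
    with exp S(3) assms(6) show False
      by (simp add: algebra_simps)
  qed
  show ?thesis
  proof (rule ccontr)
    assume neg: "\<not> ?thesis"
    then have "\<exists>S. S \<subseteq> P \<and> finite S \<and> card S = K + 1"
    proof (cases "finite P")
      case True
      with neg have "K + 1 \<le> card P" by auto
      then obtain S where "S \<subseteq> P" "card S = K + 1" by (meson obtain_subset_with_card_n)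
      with True show ?thesis by (meson finite_subset)
    next
      case False
      then obtain S where "S \<subseteq> P" "finite S" "card S = K + 1"
        by (meson infinite_arbitrarily_large)
      then show ?thesis by blast
    qed
    with noS show False by blast
  qed
qed

end
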